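(* Let $h=(h_1,h_2)\in\mathbb{R}^{2*}$, $h\neq0$, let $\nu$ be an antinorm on $\mathbb{R}^2$ whose unit ball $\Omega=\{u:\nu(u)\ge1\}$ has properties $( * )$ and $( ** )$, and let $\mathcal H(h,u)=\langle h,u\rangle+\nu(u)$ for $u\in C=\operatorname{dom}\nu=\operatorname{cl}\mathbb{R}_+\Omega$. 1. If $(-h_1,h_2)\in\operatorname{int}\Omega^\diamond$, the maximum of $\mathcal H(h,u)$ over $u\in C$ is attained only at $u=0$. 2. If $(-h_1,h_2)\in\partial\Omega^\diamond$, write $(-h_1,h_2)=(\cosh_{\Omega^\diamond}\eta,\sinh_{\Omega^\diamond}\eta)$ for some angle $\eta$. Then $\max_{u\in C}\mathcal H(h,u)$ is attained at every point of $\{\lambda(\cosh_\Omega\theta,\sinh_\Omega\theta):\lambda\ge0,\ \theta\in{}^\diamond\eta\}$.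
   Context: An antinorm on $\mathbb{R}^2$ is $\nu:\mathbb{R}^2\to\mathbb{R}\cup\{-\infty\}$ concave, upper semicontinuous, positively homogeneous, with $\operatorname{dom}\nu\neq\varnothing$ and $\nu>0$ on $\operatorname{ri}\operatorname{dom}\nu$; its unit ball is nonempty, closed, convex, avoids $0$ and satisfies $\lambda\Omega\subset\Omega$ for $\lambda>1$. Points of $\mathbb{R}^2$: $(x,y)$; of $\mathbb{R}^{2*}$: $(p,q)$. $( * )$: $\lambda\Omega\cap\partial\Omega=\varnothing$ for $\lambda>1$. $( ** )$: the boundary rays $l_0,l_1$ of $C$ satisfy $\operatorname{dist}(l_k,\Omega)=0$. Antipolar: $\Omega^\diamond=\{(p,q):px-qy\ge1\ \forall(x,y)\in\Omega\}$. Hyperbolic convex trigonometric functions: fix $\omega_0=(x_0,y_0)\in\partial\Omega$, $\omega_0^\diamond=(p_0,q_0)\in\partial\Omega^\diamond$ with $p_0x_0-q_0y_0=1$; for $\omega=(x,y)\in\partial\Omega$, $\theta$ is twice the signed (counterclockwise positive) area of the region bounded by the segment $O\omega_0$, the arc of $\partial\Omega$ from $\omega_0$ to $\omega$ and the segment $\omega O$, and $(\cosh_\Omega\theta,\sinh_\Omega\theta)=(x,y)$; $\cosh_{\Omega^\diamond},\sinh_{\Omega^\diamond}$ are defined likewise; ${}^\diamond\eta$ is the set of $\theta$ with $\cosh_\Omega\theta\cosh_{\Omega^\diamond}\eta-\sinh_\Omega\theta\sinh_{\Omega^\diamond}\eta=1$. *)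

theory Defs
  imports "HOL-Analysis.Analysis" "HOL-Library.Extended_Real"
begin

type_synonym pt = "real \<times> real"

definition edom :: "(pt \<Rightarrow> ereal) \<Rightarrow> pt set" where
  "edom \<nu> = {u. \<nu> u \<noteq> -\<infinity>}"

definition antinorm :: "(pt \<Rightarrow> ereal) \<Rightarrow> bool" where
  "antinorm \<nu> \<longleftrightarrow>
     (\<forall>u. \<nu> u \<noteq> \<infinity>) \<and>
     (\<forall>u v t. 0 < t \<and> t < 1 \<longrightarrow>
        ereal (1 - t) * \<nu> u + ereal t * \<nu> v \<le> \<nu> ((1 - t) *\<^sub>R u + t *\<^sub>R v)) \<and>
     (\<forall>c::real. closed {u. ereal c \<le> \<nu> u}) \<and>
     (\<forall>(l::real) u. 0 < l \<longrightarrow> \<nu> (l *\<^sub>R u) = ereal l * \<nu> u) \<and>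
     edom \<nu> \<noteq> {} \<and>
     (\<forall>u \<in> rel_interior (edom \<nu>). \<nu> u > 0)"

definition unit_ball :: "(pt \<Rightarrow> ereal) \<Rightarrow> pt set" where
  "unit_ball \<nu> = {u. 1 \<le> \<nu> u}"

definition prop_star :: "pt set \<Rightarrow> bool" where
  "prop_star \<Omega> \<longleftrightarrow> (\<forall>l::real. l > 1 \<longrightarrow> ((\<lambda>u. l *\<^sub>R u) ` \<Omega>) \<inter> frontier \<Omega> = {})"

definition boundary_rays :: "pt set \<Rightarrow> pt set set" where
  "boundary_rays C = {{t *\<^sub>R u | t. t \<ge> 0} | u. u \<in> frontier C \<and> u \<noteq> 0}"

definition prop_starstar :: "pt set \<Rightarrow> pt set \<Rightarrow> bool" where
  "prop_starstar C \<Omega> \<longleftrightarrow> (\<forall>l \<in> boundary_rays C. setdist l \<Omega> = 0)"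

definition antipolar :: "pt set \<Rightarrow> pt set" where
  "antipolar \<Omega> = {(p, q). \<forall>(x, y) \<in> \<Omega>. p * x - q * y \<ge> 1}"

definition Ham :: "(pt \<Rightarrow> ereal) \<Rightarrow> pt \<Rightarrow> pt \<Rightarrow> ereal" where
  "Ham \<nu> h u = ereal (h \<bullet> u) + \<nu> u"

definition is_max_point :: "(pt \<Rightarrow> ereal) \<Rightarrow> pt \<Rightarrow> pt \<Rightarrow> bool" where
  "is_max_point \<nu> h u \<longleftrightarrow> u \<in> edom \<nu> \<and> (\<forall>v \<in> edom \<nu>. Ham \<nu> h v \<le> Ham \<nu> h u)"

text \<open>For w in the boundary of S,
  the region bounded by segment O w0, the arc of the boundary from w0 to w and the segment w O
  is the union of segments from O to boundary points in the angular sector spanned by w0 and w.\<close>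
definition cross2 :: "pt \<Rightarrow> pt \<Rightarrow> real" where
  "cross2 a b = fst a * snd b - snd a * fst b"

definition sector_region :: "pt set \<Rightarrow> pt \<Rightarrow> pt \<Rightarrow> pt set" where
  "sector_region S w0 w =
     {t *\<^sub>R b | t b. 0 \<le> t \<and> t \<le> 1 \<and> b \<in> frontier S \<and>
        (\<exists>\<alpha> \<beta>. \<alpha> \<ge> 0 \<and> \<beta> \<ge> 0 \<and> b = \<alpha> *\<^sub>R w0 + \<beta> *\<^sub>R w)}"

text \<open>theta = twice the signed (counterclockwise positive) area.\<close>
definition hyp_angle :: "pt set \<Rightarrow> pt \<Rightarrow> pt \<Rightarrow> real" where
  "hyp_angle S w0 w = 2 * sgn (cross2 w0 w) * measure lebesgue (sector_region S w0 w)"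

definition hyp_angles :: "pt set \<Rightarrow> pt \<Rightarrow> real set" where
  "hyp_angles S w0 = hyp_angle S w0 ` frontier S"

definition hyp_point :: "pt set \<Rightarrow> pt \<Rightarrow> real \<Rightarrow> pt" where
  "hyp_point S w0 \<theta> = (THE w. w \<in> frontier S \<and> hyp_angle S w0 w = \<theta>)"

definition hcosh :: "pt set \<Rightarrow> pt \<Rightarrow> real \<Rightarrow> real" where
  "hcosh S w0 \<theta> = fst (hyp_point S w0 \<theta>)"

definition hsinh :: "pt set \<Rightarrow> pt \<Rightarrow> real \<Rightarrow> real" where
  "hsinh S w0 \<theta> = snd (hyp_point S w0 \<theta>)"

definition diamond_angles :: "pt set \<Rightarrow> pt \<Rightarrow> pt set \<Rightarrow> pt \<Rightarrow> real \<Rightarrow> real set" where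
  "diamond_angles \<Omega> w0 \<Omega>d w0d \<eta> =
     {\<theta> \<in> hyp_angles \<Omega> w0.
        hcosh \<Omega> w0 \<theta> * hcosh \<Omega>d w0d \<eta> - hsinh \<Omega> w0 \<theta> * hsinh \<Omega>d w0d \<eta> = 1}"

end

theory Submission
  imports Defs
begin


lemma measure_strict:
  fixes A B V :: "pt set"
  assumes "compact A" "compact B" "A \<subseteq> B" "open V" "V \<noteq> {}" "V \<subseteq> B - A"
  shows "measure lebesgue A < measure lebesgue B"
proof -
  have la: "A \<in> lmeasurable" "B \<in> lmeasurable" using assms lmeasurable_compact by auto
  have d: "measure lebesgue (B - A) = measure lebesgue B - measure lebesgue A"
    using measurable_measure_Diff[of B lebesgue A] la assms(3) by (auto simp: fmeasurableD)
  have lm: "B - A \<in> lmeasurable" using la by (auto intro: fmeasurable_Diff fmeasurableD)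
  have "\<not> negligible V" using open_not_negligible assms by blast
  hence "\<not> negligible (B - A)" using negligible_subset assms(6) by blast
  hence "measure lebesgue (B - A) \<noteq> 0" using negligible_iff_measure0 lm by blast
  moreover have "measure lebesgue (B - A) \<ge> 0" by simp
  ultimately show ?thesis using d by linarith
qed

context fixes \<nu> :: "pt \<Rightarrow> ereal" assumes A: "antinorm \<nu>"
begin

lemma parts1: "(\<forall>u. \<nu> u \<noteq> \<infinity>)"
  using A unfolding antinorm_def by (elim conjE) assumption
lemma parts2: "(\<forall>u v t. 0 < t \<and> t < 1 \<longrightarrow>
        ereal (1 - t) * \<nu> u + ereal t * \<nu> v \<le> \<nu> ((1 - t) *\<^sub>R u + t *\<^sub>R v))"
  using A unfolding antinorm_def by (elim conjE) assumption
lemma parts3: "(\<forall>c::real. closed {u. ereal c \<le> \<nu> u})"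
  using A unfolding antinorm_def by (elim conjE) assumption
lemma parts4: "(\<forall>(l::real) u. 0 < l \<longrightarrow> \<nu> (l *\<^sub>R u) = ereal l * \<nu> u)"
  using A unfolding antinorm_def by (elim conjE) assumption
lemma parts5: "edom \<nu> \<noteq> {}"
  using A unfolding antinorm_def by (elim conjE) assumption
lemma parts6: "(\<forall>u \<in> rel_interior (edom \<nu>). \<nu> u > 0)"
  using A unfolding antinorm_def by (elim conjE) assumption
lemmas parts = parts1 parts2 parts3 parts4 parts5 parts6

lemma fin: "\<nu> u \<noteq> \<infinity>" using parts(1) by blast
lemma conc: "0 < t \<Longrightarrow> t < 1 \<Longrightarrow> ereal (1 - t) * \<nu> u + ereal t * \<nu> v \<le> \<nu> ((1 - t) *\<^sub>R u + t *\<^sub>R v)"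
  using parts(2) by blast
lemma clo: "closed {u. ereal c \<le> \<nu> u}" using parts(3) by blast
lemma hom: "0 < l \<Longrightarrow> \<nu> (l *\<^sub>R u) = ereal l * \<nu> u" using parts(4) by blast
lemma domne: "edom \<nu> \<noteq> {}" using parts(5) by blast
lemma ripos: "u \<in> rel_interior (edom \<nu>) \<Longrightarrow> \<nu> u > 0" using parts(6) by blast

lemma dom_real: "u \<in> edom \<nu> \<Longrightarrow> \<exists>a. \<nu> u = ereal a"
  using fin[of u] unfolding edom_def by (cases "\<nu> u") auto

lemma homr: "0 < l \<Longrightarrow> \<nu> u = ereal a \<Longrightarrow> \<nu> (l *\<^sub>R u) = ereal (l * a)"
  using hom by simp

lemma superadd:
  assumes "\<nu> u = ereal a" "\<nu> v = ereal b"
  shows "\<exists>c. \<nu> (u + v) = ereal c \<and> a + b \<le> c"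
proof -
  have "ereal (1 - 1/2) * \<nu> u + ereal (1/2) * \<nu> v \<le> \<nu> ((1 - 1/2) *\<^sub>R u + (1/2) *\<^sub>R v)"
    by (rule conc) auto
  moreover have "(1 - 1/2) *\<^sub>R u + (1/2) *\<^sub>R v = (1/2::real) *\<^sub>R (u+v)"
    by (simp add: scaleR_right_distrib)
  moreover have "ereal (1 - 1/2) * \<nu> u + ereal (1/2) * \<nu> v = ereal ((a+b)/2)"
    using assms by simp
  ultimately have le: "ereal ((a + b)/2) \<le> \<nu> ((1/2) *\<^sub>R (u + v))" by metis
  obtain c where c: "\<nu> ((1/2) *\<^sub>R (u + v)) = ereal c"
    using le fin[of "(1/2) *\<^sub>R (u + v)"] by (cases "\<nu> ((1/2) *\<^sub>R (u + v))") auto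
  have "\<nu> (2 *\<^sub>R ((1/2) *\<^sub>R (u + v))) = ereal (2 * c)" using homr[OF _ c, of 2] by simp
  moreover have "2 *\<^sub>R ((1/2) *\<^sub>R (u + v)) = u + v" by simp
  ultimately have "\<nu> (u + v) = ereal (2*c)" by metis
  moreover have "(a+b)/2 \<le> c" using le c by simp
  ultimately show ?thesis by (intro exI[of _ "2*c"]) auto
qed

lemma nu0: "\<nu> 0 = 0"
proof -
  obtain u where u: "u \<in> edom \<nu>" using domne by auto
  obtain a where a: "\<nu> u = ereal a" using dom_real[OF u] by auto
  let ?S = "{x. ereal (- \<bar>a\<bar> - 1) \<le> \<nu> x}"
  have "\<forall>n. (inverse (real (Suc n))) *\<^sub>R u \<in> ?S"
  proof
    fix n
    have "\<nu> ((inverse (real (Suc n))) *\<^sub>R u) = ereal (inverse (real (Suc n)) * a)" using homr[OF _ a, of "inverse (real (Suc n))"] by simp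
    moreover have "- \<bar>a\<bar> - 1 \<le> inverse (real (Suc n)) * a"
    proof -
      have "0 < inverse (real (Suc n))" "inverse (real (Suc n)) \<le> 1" by (auto simp: inverse_le_1_iff)
      hence "\<bar>inverse (real (Suc n)) * a\<bar> \<le> \<bar>a\<bar>" by (simp add: abs_mult mult_left_le_one_le)
      thus ?thesis by linarith
    qed
    ultimately show "(inverse (real (Suc n))) *\<^sub>R u \<in> ?S" by simp
  qed
  moreover have "(\<lambda>n. (inverse (real (Suc n))) *\<^sub>R u) \<longlonglongrightarrow> 0"
    using tendsto_scaleR[OF LIMSEQ_inverse_real_of_nat tendsto_const, of u, unfolded scale_zero_left] .
  ultimately have "0 \<in> ?S"
    using closed_sequentially[OF clo[of "- \<bar>a\<bar> - 1"], of "\<lambda>n. (inverse (real (Suc n))) *\<^sub>R u" 0] by blast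
  hence ne: "\<nu> 0 \<noteq> -\<infinity>" by auto
  have "\<nu> (2 *\<^sub>R 0) = ereal 2 * \<nu> 0" using hom[of 2 0] by simp
  hence "\<nu> 0 = ereal 2 * \<nu> 0" by simp
  thus ?thesis using ne fin[of 0] by (cases "\<nu> 0") auto
qed


lemma dom_conv: "convex (edom \<nu>)"
proof (rule convexI)
  fix x y :: pt and u v :: real
  assume x: "x \<in> edom \<nu>" and y: "y \<in> edom \<nu>" and uv: "0 \<le> u" "0 \<le> v" "u + v = 1"
  obtain a where a: "\<nu> x = ereal a" using dom_real[OF x] by auto
  obtain b where b: "\<nu> y = ereal b" using dom_real[OF y] by auto
  show "u *\<^sub>R x + v *\<^sub>R y \<in> edom \<nu>"
  proof (cases "v = 0 \<or> v = 1")
    case True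
    then show ?thesis using x y uv by auto
  next
    case False
    hence v: "0 < v" "v < 1" using uv by auto
    have "ereal (1 - v) * \<nu> x + ereal v * \<nu> y \<le> \<nu> ((1 - v) *\<^sub>R x + v *\<^sub>R y)"
      by (rule conc[OF v])
    hence "ereal ((1 - v) * a + v * b) \<le> \<nu> (u *\<^sub>R x + v *\<^sub>R y)" using a b uv
      by (simp add: eq_diff_eq[symmetric])
    thus ?thesis unfolding edom_def by auto
  qed
qed

lemma ri_ne: "rel_interior (edom \<nu>) \<noteq> {}"
  using rel_interior_eq_empty[OF dom_conv] domne by blast

lemma nonneg: assumes u: "u \<in> edom \<nu>" shows "\<nu> u \<ge> 0"
proof -
  obtain c where c: "c \<in> rel_interior (edom \<nu>)" using ri_ne by auto
  let ?f = "\<lambda>n. u - (inverse (real (Suc n))) *\<^sub>R (u - c)"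
  have "\<forall>n. ?f n \<in> {x. ereal 0 \<le> \<nu> x}"
  proof
    fix n
    have "?f n \<in> rel_interior (edom \<nu>)"
      by (rule rel_interior_convex_shrink[OF dom_conv c u]) (auto simp: inverse_le_1_iff)
    hence "0 < \<nu> (?f n)" by (rule ripos)
    thus "?f n \<in> {x. ereal 0 \<le> \<nu> x}" by (metis less_imp_le zero_ereal_def mem_Collect_eq)
  qed
  moreover have "?f \<longlonglongrightarrow> u"
    using tendsto_diff[OF tendsto_const tendsto_scaleR[OF LIMSEQ_inverse_real_of_nat tendsto_const], of u "u - c"]
    by (simp only: scale_zero_left diff_zero)
  ultimately have "u \<in> {x. ereal 0 \<le> \<nu> x}"
    using closed_sequentially[OF clo[of 0], of ?f u] by blast
  thus ?thesis by (simp add: zero_ereal_def)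
qed

lemma omega_ne: "\<exists>w. \<nu> w = ereal 1"
proof -
  obtain c where c: "c \<in> rel_interior (edom \<nu>)" using ri_ne by auto
  hence cd: "c \<in> edom \<nu>" using rel_interior_subset by auto
  obtain a where a: "\<nu> c = ereal a" using dom_real[OF cd] by auto
  have "a > 0" using ripos[OF c] a by simp
  hence "\<nu> ((1/a) *\<^sub>R c) = ereal 1" using homr[OF _ a, of "1/a"] by simp
  thus ?thesis by blast
qed

lemma polar_ineq:
  assumes "(q1, q2) \<in> antipolar (unit_ball \<nu>)" "\<nu> (y1, y2) = ereal c" "c > 0"
  shows "q1 * y1 - q2 * y2 \<ge> c"
proof -
  have "\<nu> ((1/c) *\<^sub>R (y1, y2)) = ereal 1" using homr[OF _ assms(2), of "1/c"] assms(3) by simp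
  hence "(y1/c, y2/c) \<in> unit_ball \<nu>" unfolding unit_ball_def by (simp add: divide_inverse mult.commute)
  hence "q1 * (y1/c) - q2 * (y2/c) \<ge> 1" using assms(1) unfolding antipolar_def by force
  hence "(q1 * y1 - q2 * y2) / c \<ge> 1" by (simp add: diff_divide_distrib)
  thus ?thesis using assms(3) by (simp add: le_divide_eq)
qed


lemma norm_pair_sq: "(norm (y1::real, y2::real))^2 = y1^2 + y2^2"
  by (simp add: norm_prod_def)

lemma int_ineq:
  assumes B: "ball (q1, q2) r \<subseteq> antipolar (unit_ball \<nu>)" and r: "r > 0"
    and y: "\<nu> (y1, y2) = ereal c" and c: "c > 0"
  shows "q1 * y1 - q2 * y2 \<ge> c + (r/2) * norm (y1, y2)"
proof -
  define n where "n = norm (y1, y2)"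
  have "(y1, y2) \<noteq> 0" using y c nu0 by (auto simp: zero_prod_def)
  hence n: "n > 0" unfolding n_def by simp
  define k where "k = r / (2 * n)"
  have k: "k > 0" using n r unfolding k_def by simp
  have e: "(q1, q2) - (q1 - k * y1, q2 + k * y2) = k *\<^sub>R (y1, - y2)" by simp
  have "dist (q1, q2) (q1 - k * y1, q2 + k * y2) = norm (k *\<^sub>R (y1, - y2))"
    by (simp only: dist_norm e)
  also have "\<dots> = k * norm (y1, - y2)" by (simp only: norm_scaleR abs_of_pos[OF k])
  also have "norm (y1, - y2) = n" unfolding n_def by (simp add: norm_prod_def)
  also have "k * n = r / 2" unfolding k_def using n by simp
  finally have "(q1 - k * y1, q2 + k * y2) \<in> ball (q1, q2) r" using r by simp
  hence "(q1 - k * y1, q2 + k * y2) \<in> antipolar (unit_ball \<nu>)" using B by blast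
  hence "(q1 - k * y1) * y1 - (q2 + k * y2) * y2 \<ge> c" by (rule polar_ineq[OF _ y c])
  hence "q1 * y1 - q2 * y2 \<ge> c + k * (y1^2 + y2^2)" by (simp add: algebra_simps power2_eq_square)
  also have "y1^2 + y2^2 = n * n" unfolding n_def using norm_pair_sq[of y1 y2] by (simp add: power2_eq_square)
  also have "k * (n * n) = (r/2) * n" unfolding k_def using n by simp
  finally show ?thesis unfolding n_def .
qed

lemma key_neg:
  assumes P: "(-fst h, snd h) \<in> interior (antipolar (unit_ball \<nu>))"
    and v: "v \<in> edom \<nu>" "v \<noteq> 0"
  shows "Ham \<nu> h v < 0"
proof -
  obtain r where r: "r > 0" "ball (-fst h, snd h) r \<subseteq> antipolar (unit_ball \<nu>)"
    using P mem_interior by blast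
  obtain a where a: "\<nu> v = ereal a" using dom_real[OF v(1)] by auto
  have a0: "a \<ge> 0" using nonneg[OF v(1)] a by simp
  obtain w where w: "\<nu> w = ereal 1" using omega_ne by auto
  define K where "K = \<bar>h \<bullet> w\<bar> + (r/2) * norm w + 1"
  have K: "K > 0" unfolding K_def using r by (simp add: add_nonneg_pos)
  define nv where "nv = norm v"
  have nv: "nv > 0" using v unfolding nv_def by simp
  define s where "s = (r/4) * nv / K"
  have s: "s > 0" unfolding s_def using r nv K by simp
  have sK: "s * K = (r/4) * nv" unfolding s_def using K by simp
  have sw: "\<nu> (s *\<^sub>R w) = ereal s" using homr[OF s w] by simp
  obtain c where c: "\<nu> (v + s *\<^sub>R w) = ereal c" "a + s \<le> c" using superadd[OF a sw] by auto
  have c0: "c > 0" using c a0 s by linarith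
  define y where "y = v + s *\<^sub>R w"
  obtain y1 y2 where yy: "y = (y1, y2)" by (cases y)
  have "-fst h * y1 - snd h * y2 \<ge> c + (r/2) * norm (y1, y2)"
    by (rule int_ineq[OF r(2) r(1) _ c0]) (use c yy y_def in simp)
  hence "- (h \<bullet> y) \<ge> c + (r/2) * norm y" using yy by (simp add: inner_prod_def)
  moreover have "norm y \<ge> nv - s * norm w"
    using norm_triangle_ineq4[of y "s *\<^sub>R w"] unfolding y_def nv_def using s by simp
  moreover have "h \<bullet> y = h \<bullet> v + s * (h \<bullet> w)" unfolding y_def by (simp add: inner_add_right)
  moreover have "s * (h \<bullet> w) \<ge> - (s * \<bar>h \<bullet> w\<bar>)"
  proof -
    have "- \<bar>h \<bullet> w\<bar> \<le> h \<bullet> w" by simp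
    hence "s * (- \<bar>h \<bullet> w\<bar>) \<le> s * (h \<bullet> w)" using s by (intro mult_left_mono) auto
    thus ?thesis by simp
  qed
  moreover have "(r/2) * (nv - s * norm w) = (r/2) * nv - s * ((r/2) * norm w)" by (simp add: algebra_simps)
  moreover have "(r/2) * (nv - s * norm w) \<le> (r/2) * norm y" using calculation(2) r by simp
  moreover have "s * K = s * \<bar>h \<bullet> w\<bar> + s * ((r/2) * norm w) + s" unfolding K_def by (simp add: algebra_simps)
  moreover have "(r/4) * nv = (1/2) * ((r/2) * nv)" by simp
  ultimately have "- (h \<bullet> v) \<ge> a + (r/4) * nv" using c sK s by linarith
  moreover have "(r/4) * nv > 0" using r nv by simp
  ultimately have "h \<bullet> v + a < 0" by linarith
  thus ?thesis unfolding Ham_def using a by simp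
qed

lemma part1:
  assumes P: "(-fst h, snd h) \<in> interior (antipolar (unit_ball \<nu>))"
  shows "is_max_point \<nu> h u \<longleftrightarrow> u = 0"
proof -
  have z: "0 \<in> edom \<nu>" "Ham \<nu> h 0 = 0" using nu0 by (auto simp: edom_def Ham_def)
  show ?thesis
  proof
    assume m: "is_max_point \<nu> h u"
    show "u = 0"
    proof (rule ccontr)
      assume "u \<noteq> 0"
      hence "Ham \<nu> h u < 0" using key_neg[OF P] m unfolding is_max_point_def by blast
      moreover have "Ham \<nu> h 0 \<le> Ham \<nu> h u" using m z unfolding is_max_point_def by blast
      ultimately show False using z by simp
    qed
  next
    assume "u = 0"
    have "\<forall>v\<in>edom \<nu>. Ham \<nu> h v \<le> Ham \<nu> h 0"
    proof
      fix v assume v: "v \<in> edom \<nu>"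
      show "Ham \<nu> h v \<le> Ham \<nu> h 0"
      proof (cases "v = 0")
        case False
        thus ?thesis using key_neg[OF P v] z by simp
      qed simp
    qed
    thus "is_max_point \<nu> h u" unfolding is_max_point_def using z \<open>u = 0\<close> by simp
  qed
qed

lemma part2_le:
  assumes P: "(-fst h, snd h) \<in> antipolar (unit_ball \<nu>)" and z: "\<nu> z = ereal 1" "h \<bullet> z = -1"
    and v: "v \<in> edom \<nu>"
  shows "Ham \<nu> h v \<le> 0"
proof -
  obtain a where a: "\<nu> v = ereal a" using dom_real[OF v] by auto
  define s where "s = \<bar>a\<bar> + 1"
  have s: "s > 0" unfolding s_def by simp
  have sz: "\<nu> (s *\<^sub>R z) = ereal s" using homr[OF s z(1)] by simp
  obtain c where c: "\<nu> (v + s *\<^sub>R z) = ereal c" "a + s \<le> c" using superadd[OF a sz] by auto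
  have c0: "c > 0" using c unfolding s_def by linarith
  define y where "y = v + s *\<^sub>R z"
  obtain y1 y2 where yy: "y = (y1, y2)" by (cases y)
  have "-fst h * y1 - snd h * y2 \<ge> c"
    by (rule polar_ineq[OF P _ c0]) (use c yy y_def in simp)
  hence "- (h \<bullet> y) \<ge> c" using yy by (simp add: inner_prod_def)
  moreover have "h \<bullet> y = h \<bullet> v - s" unfolding y_def using z by (simp add: inner_add_right)
  ultimately have "h \<bullet> v + a \<le> 0" using c by linarith
  thus ?thesis unfolding Ham_def using a by simp
qed

lemma part2_max:
  assumes P: "(-fst h, snd h) \<in> antipolar (unit_ball \<nu>)" and z: "\<nu> z = ereal 1" "h \<bullet> z = -1"
    and lam: "lam \<ge> 0"
  shows "is_max_point \<nu> h (lam *\<^sub>R z)"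
proof -
  have "lam *\<^sub>R z \<in> edom \<nu> \<and> Ham \<nu> h (lam *\<^sub>R z) = 0"
  proof (cases "lam = 0")
    case True
    then show ?thesis using nu0 by (simp add: edom_def Ham_def)
  next
    case False
    hence l: "lam > 0" using lam by simp
    have "\<nu> (lam *\<^sub>R z) = ereal lam" using homr[OF l z(1)] by simp
    then show ?thesis using z(2) by (simp add: edom_def Ham_def)
  qed
  thus ?thesis unfolding is_max_point_def using part2_le[OF P z] by simp
qed

end



lemma cross_lin1: "cross2 (a *\<^sub>R w0 + b *\<^sub>R w) w = a * cross2 w0 w"
  by (cases w0; cases w) (simp add: cross2_def algebra_simps)
lemma cross_lin2: "cross2 w0 (a *\<^sub>R w0 + b *\<^sub>R w) = b * cross2 w0 w"
  by (cases w0; cases w) (simp add: cross2_def algebra_simps)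
lemma cross_anti: "cross2 a b = - cross2 b a"
  by (simp add: cross2_def)
lemma cross_self: "cross2 a a = 0"
  by (simp add: cross2_def)

lemma cramer_eq:
  assumes D: "cross2 w0 w \<noteq> 0"
  shows "b = (cross2 b w / cross2 w0 w) *\<^sub>R w0 + (cross2 w0 b / cross2 w0 w) *\<^sub>R w"
proof -
  obtain x y where b: "b = (x, y)" by (cases b)
  obtain a c where w0: "w0 = (a, c)" by (cases w0)
  obtain d e where w: "w = (d, e)" by (cases w)
  have D': "a * e - c * d \<noteq> 0" using D w0 w by (simp add: cross2_def)
  define D where "D = a * e - c * d"
  have DD: "D \<noteq> 0" using D' unfolding D_def .
  have "((x * e - y * d) / D) * a + ((a * y - c * x) / D) * d = ((x * e - y * d) * a + (a * y - c * x) * d) / D"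
    by (simp add: add_divide_distrib)
  also have "(x * e - y * d) * a + (a * y - c * x) * d = x * D" unfolding D_def by (simp add: algebra_simps)
  finally have 1: "x = ((x * e - y * d) / D) * a + ((a * y - c * x) / D) * d" using DD by simp
  have "((x * e - y * d) / D) * c + ((a * y - c * x) / D) * e = ((x * e - y * d) * c + (a * y - c * x) * e) / D"
    by (simp add: add_divide_distrib)
  also have "(x * e - y * d) * c + (a * y - c * x) * e = y * D" unfolding D_def by (simp add: algebra_simps)
  finally have 2: "y = ((x * e - y * d) / D) * c + ((a * y - c * x) / D) * e" using DD by simp
  show ?thesis using 1 2 b w0 w unfolding D_def by (simp add: cross2_def)
qed

lemma incone_iff:
  assumes D: "cross2 w0 w \<noteq> 0"
  shows "(\<exists>\<alpha> \<beta>. \<alpha> \<ge> 0 \<and> \<beta> \<ge> 0 \<and> b = \<alpha> *\<^sub>R w0 + \<beta> *\<^sub>R w) \<longleftrightarrow>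
         (0 \<le> cross2 b w / cross2 w0 w \<and> 0 \<le> cross2 w0 b / cross2 w0 w)"
proof
  assume "\<exists>\<alpha> \<beta>. \<alpha> \<ge> 0 \<and> \<beta> \<ge> 0 \<and> b = \<alpha> *\<^sub>R w0 + \<beta> *\<^sub>R w"
  then obtain \<alpha> \<beta> where ab: "\<alpha> \<ge> 0" "\<beta> \<ge> 0" "b = \<alpha> *\<^sub>R w0 + \<beta> *\<^sub>R w" by blast
  have "cross2 b w / cross2 w0 w = \<alpha>" using ab(3) D by (simp add: cross_lin1)
  moreover have "cross2 w0 b / cross2 w0 w = \<beta>" using ab(3) D by (simp add: cross_lin2)
  ultimately show "0 \<le> cross2 b w / cross2 w0 w \<and> 0 \<le> cross2 w0 b / cross2 w0 w" using ab by simp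
next
  assume "0 \<le> cross2 b w / cross2 w0 w \<and> 0 \<le> cross2 w0 b / cross2 w0 w"
  thus "\<exists>\<alpha> \<beta>. \<alpha> \<ge> 0 \<and> \<beta> \<ge> 0 \<and> b = \<alpha> *\<^sub>R w0 + \<beta> *\<^sub>R w"
    using cramer_eq[OF D, of b] by blast
qed

lemma cont_cross1: "c \<noteq> 0 \<Longrightarrow> continuous_on UNIV (\<lambda>b. cross2 b w / c)"
  unfolding cross2_def by (intro continuous_intros) auto
lemma cont_cross2: "c \<noteq> 0 \<Longrightarrow> continuous_on UNIV (\<lambda>b. cross2 w0 b / c)"
  unfolding cross2_def by (intro continuous_intros) auto

context fixes \<nu> :: "pt \<Rightarrow> ereal" assumes A: "antinorm \<nu>"
begin

lemma homr0: "0 \<le> l \<Longrightarrow> \<nu> u = ereal a \<Longrightarrow> \<nu> (l *\<^sub>R u) = ereal (l * a)"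
  using homr[OF A, of l u a] nu0[OF A] by (cases "l = 0") (auto simp: zero_ereal_def)

lemma closed_Om: "closed (unit_ball \<nu>)"
  unfolding unit_ball_def using clo[OF A, of 1] by (simp add: one_ereal_def)

lemma one_front: assumes w: "\<nu> w = ereal 1" shows "w \<in> frontier (unit_ball \<nu>)"
proof -
  have wO: "w \<in> unit_ball \<nu>" using w unfolding unit_ball_def by (simp add: one_ereal_def)
  have "w \<notin> interior (unit_ball \<nu>)"
  proof
    assume "w \<in> interior (unit_ball \<nu>)"
    then obtain e where e: "e > 0" "ball w e \<subseteq> unit_ball \<nu>" using mem_interior by blast
    define t where "t = min (1/2) (e / (2 * (norm w + 1)))"
    have "2 * (norm w + 1) > 0" by (simp add: add_nonneg_pos)
    hence "e / (2 * (norm w + 1)) > 0" using e by simp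
    hence t: "0 < t" "t < 1" unfolding t_def by auto
    have "t * norm w \<le> (e / (2 * (norm w + 1))) * norm w"
      unfolding t_def by (intro mult_right_mono) auto
    also have "\<dots> < e"
    proof -
      have "(e / (2 * (norm w + 1))) * norm w = e * (norm w / (2 * (norm w + 1)))" by simp
      moreover have "norm w / (2 * (norm w + 1)) < 1"
      proof -
        have p: "2 * (norm w + 1) > 0" by (simp add: add_nonneg_pos)
        have "norm w < 2 * (norm w + 1)" by (smt (verit) norm_ge_zero)
        thus ?thesis using p by (simp only: divide_less_eq_1_pos)
      qed
      ultimately show ?thesis using e by (metis mult.right_neutral mult_strict_left_mono)
    qed
    finally have "dist w ((1 - t) *\<^sub>R w) < e"
      using t by (simp add: dist_norm algebra_simps)
    hence "(1 - t) *\<^sub>R w \<in> unit_ball \<nu>" using e by auto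
    moreover have "\<nu> ((1 - t) *\<^sub>R w) = ereal (1 - t)" using homr[OF A _ w, of "1 - t"] t by simp
    ultimately show False using t unfolding unit_ball_def by (simp add: one_ereal_def)
  qed
  thus ?thesis using wO closure_subset unfolding frontier_def by blast
qed

lemma ball_lt1: "\<exists>r>0. \<forall>p. norm p < r \<longrightarrow> \<nu> p < 1"
proof -
  have "open (- {u. ereal 1 \<le> \<nu> u})" using clo[OF A, of 1] by (simp add: open_Compl)
  moreover have "0 \<in> - {u. ereal 1 \<le> \<nu> u}" using nu0[OF A] by simp
  ultimately obtain r where r: "r > 0" "ball 0 r \<subseteq> - {u. ereal 1 \<le> \<nu> u}"
    using open_contains_ball by blast
  have "\<forall>p. norm p < r \<longrightarrow> \<nu> p < 1"
  proof (intro allI impI)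
    fix p :: pt assume "norm p < r"
    hence "p \<in> ball 0 r" by simp
    hence "\<not> ereal 1 \<le> \<nu> p" using r by auto
    thus "\<nu> p < 1" by (simp add: one_ereal_def not_le)
  qed
  thus ?thesis using r by blast
qed

context assumes S: "prop_star (unit_ball \<nu>)"
begin

lemma front_one: assumes w: "w \<in> frontier (unit_ball \<nu>)" shows "\<nu> w = ereal 1"
proof -
  have "w \<in> unit_ball \<nu>" using w frontier_subset_closed[OF closed_Om] by blast
  hence ge: "1 \<le> \<nu> w" unfolding unit_ball_def by simp
  obtain a where a: "\<nu> w = ereal a" using ge fin[OF A, of w] by (cases "\<nu> w") auto
  have a1: "a \<ge> 1" using ge a by (simp add: one_ereal_def)
  show ?thesis
  proof (rule ccontr)
    assume "\<nu> w \<noteq> ereal 1"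
    hence a1': "a > 1" using a a1 by auto
    have "\<nu> ((1/a) *\<^sub>R w) = ereal 1" using homr[OF A _ a, of "1/a"] a1' by simp
    hence "(1/a) *\<^sub>R w \<in> unit_ball \<nu>" unfolding unit_ball_def by (simp add: one_ereal_def)
    moreover have "a *\<^sub>R ((1/a) *\<^sub>R w) = w" using a1' by simp
    ultimately have "w \<in> ((\<lambda>u. a *\<^sub>R u) ` unit_ball \<nu>) \<inter> frontier (unit_ball \<nu>)"
      using w by (metis IntI image_eqI)
    thus False using S a1' unfolding prop_star_def by blast
  qed
qed

end
end



context fixes \<nu> :: "pt \<Rightarrow> ereal" assumes A: "antinorm \<nu>" and S: "prop_star (unit_ball \<nu>)"
begin

abbreviation "Om \<equiv> unit_ball \<nu>"

lemma fr1: "w \<in> frontier Om \<Longrightarrow> \<nu> w = ereal 1"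
  using front_one[OF A S] .

lemma fr_nz: "w \<in> frontier Om \<Longrightarrow> w \<noteq> 0"
  using fr1 nu0[OF A] by (metis ereal.inject one_ereal_def zero_ereal_def zero_neq_one)

lemma same_ray:
  assumes w: "w \<in> frontier Om" and w': "w' \<in> frontier Om" and c0: "cross2 w w' = 0"
  shows "w = w'"
proof -
  have nw: "w \<noteq> 0" using fr_nz[OF w] .
  obtain a b where wab: "w = (a, b)" by (cases w)
  obtain a' b' where wab': "w' = (a', b')" by (cases w')
  have cr: "a * b' = b * a'" using c0 wab wab' by (simp add: cross2_def)
  obtain c where c: "w' = c *\<^sub>R w"
  proof (cases "a = 0")
    case True
    hence "b \<noteq> 0" using nw wab by (simp add: zero_prod_def)
    hence "a' = 0" using cr True by simp
    hence "w' = (b' / b) *\<^sub>R w" using True \<open>b \<noteq> 0\<close> wab wab' by simp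
    thus ?thesis using that by blast
  next
    case False
    have "b' = (a' / a) * b" using cr False by (simp add: field_simps)
    hence "w' = (a' / a) *\<^sub>R w" using False wab wab' by simp
    thus ?thesis using that by blast
  qed
  have v1: "\<nu> w = ereal 1" "\<nu> w' = ereal 1" using fr1 w w' by auto
  consider "c > 0" | "c = 0" | "c < 0" by linarith
  thus ?thesis
  proof cases
    case 1
    have "\<nu> w' = ereal c" using homr[OF A 1 v1(1)] c by simp
    hence "c = 1" using v1 by simp
    thus ?thesis using c by simp
  next
    case 2
    thus ?thesis using c fr_nz[OF w'] by simp
  next
    case 3
    have "\<nu> ((- c) *\<^sub>R w) = ereal (- c)" using homr[OF A _ v1(1), of "-c"] 3 by simp
    then obtain d where d: "\<nu> (w' + (- c) *\<^sub>R w) = ereal d" "1 + (- c) \<le> d"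
      using superadd[OF A v1(2)] by blast
    have "w' + (- c) *\<^sub>R w = 0" using c by simp
    hence "d = 0" using d nu0[OF A] by (simp add: zero_ereal_def)
    thus ?thesis using d 3 by simp
  qed
qed

lemma bound_cone:
  assumes w0: "w0 \<in> frontier Om" and w: "w \<in> frontier Om" and b: "b \<in> frontier Om"
    and ab: "\<alpha> \<ge> 0" "\<beta> \<ge> 0" "b = \<alpha> *\<^sub>R w0 + \<beta> *\<^sub>R w"
  shows "\<alpha> + \<beta> \<le> 1"
proof -
  have "\<nu> (\<alpha> *\<^sub>R w0) = ereal \<alpha>" using homr0[OF A ab(1) fr1[OF w0]] by simp
  moreover have "\<nu> (\<beta> *\<^sub>R w) = ereal \<beta>" using homr0[OF A ab(2) fr1[OF w]] by simp
  ultimately obtain c where c: "\<nu> b = ereal c" "\<alpha> + \<beta> \<le> c" using superadd[OF A] ab(3) by blast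
  thus ?thesis using fr1[OF b] by simp
qed

lemma sector_compact:
  assumes w0: "w0 \<in> frontier Om" and w: "w \<in> frontier Om" and D: "cross2 w0 w \<noteq> 0"
  shows "compact (sector_region Om w0 w)"
proof -
  define K where "K = frontier Om \<inter> {b. 0 \<le> cross2 b w / cross2 w0 w} \<inter> {b. 0 \<le> cross2 w0 b / cross2 w0 w}"
  have cK: "closed K" unfolding K_def
    by (intro closed_Int frontier_closed closed_Collect_le continuous_on_const cont_cross1 cont_cross2 D)
  have "\<forall>b\<in>K. norm b \<le> norm w0 + norm w"
  proof
    fix b assume bK: "b \<in> K"
    then obtain \<alpha> \<beta> where ab: "\<alpha> \<ge> 0" "\<beta> \<ge> 0" "b = \<alpha> *\<^sub>R w0 + \<beta> *\<^sub>R w"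
      using incone_iff[OF D, of b] unfolding K_def by blast
    have s: "\<alpha> + \<beta> \<le> 1" using bound_cone[OF w0 w _ ab] bK unfolding K_def by blast
    have "norm b \<le> \<alpha> * norm w0 + \<beta> * norm w" using ab norm_triangle_ineq[of "\<alpha> *\<^sub>R w0" "\<beta> *\<^sub>R w"] by simp
    also have "\<dots> \<le> norm w0 + norm w"
    proof -
      have "\<alpha> * norm w0 \<le> norm w0" using ab s by (simp add: mult_left_le_one_le)
      moreover have "\<beta> * norm w \<le> norm w" using ab s by (simp add: mult_left_le_one_le)
      ultimately show ?thesis by linarith
    qed
    finally show "norm b \<le> norm w0 + norm w" .
  qed
  hence bK: "bounded K" unfolding bounded_iff by blast
  have kK: "compact K" using cK bK compact_eq_bounded_closed by blast
  have eq: "sector_region Om w0 w = (\<lambda>x. fst x *\<^sub>R snd x) ` ({0..1} \<times> K)"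
  proof
    show "sector_region Om w0 w \<subseteq> (\<lambda>x. fst x *\<^sub>R snd x) ` ({0..1} \<times> K)"
    proof
      fix p assume "p \<in> sector_region Om w0 w"
      then obtain t b where tb: "p = t *\<^sub>R b" "0 \<le> t" "t \<le> 1" "b \<in> frontier Om"
        "\<exists>\<alpha> \<beta>. \<alpha> \<ge> 0 \<and> \<beta> \<ge> 0 \<and> b = \<alpha> *\<^sub>R w0 + \<beta> *\<^sub>R w"
        unfolding sector_region_def by blast
      have "b \<in> K" using tb(4,5) incone_iff[OF D, of b] unfolding K_def by blast
      thus "p \<in> (\<lambda>x. fst x *\<^sub>R snd x) ` ({0..1} \<times> K)" using tb by (intro image_eqI[of _ _ "(t, b)"]) auto
    qed
  next
    show "(\<lambda>x. fst x *\<^sub>R snd x) ` ({0..1} \<times> K) \<subseteq> sector_region Om w0 w"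
    proof
      fix p assume "p \<in> (\<lambda>x. fst x *\<^sub>R snd x) ` ({0..1} \<times> K)"
      then obtain t b where tb: "p = t *\<^sub>R b" "0 \<le> t" "t \<le> 1" "b \<in> K" by auto
      have "\<exists>\<alpha> \<beta>. \<alpha> \<ge> 0 \<and> \<beta> \<ge> 0 \<and> b = \<alpha> *\<^sub>R w0 + \<beta> *\<^sub>R w"
        using tb(4) incone_iff[OF D, of b] unfolding K_def by blast
      thus "p \<in> sector_region Om w0 w" using tb unfolding sector_region_def K_def by blast
    qed
  qed
  have "continuous_on ({0..1} \<times> K) (\<lambda>x. fst x *\<^sub>R snd x)" by (intro continuous_intros)
  thus ?thesis unfolding eq by (intro compact_continuous_image compact_Times compact_Icc kK)
qed


lemma cross_lin_r: "cross2 a (x *\<^sub>R b + y *\<^sub>R c) = x * cross2 a b + y * cross2 a c"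
  by (cases a; cases b; cases c) (simp add: cross2_def algebra_simps)

lemma V_lemma:
  assumes w1: "w1 \<in> frontier Om" and w2: "w2 \<in> frontier Om" and D: "cross2 w1 w2 \<noteq> 0"
  shows "\<exists>V. open V \<and> V \<noteq> {} \<and> (\<forall>p\<in>V. 0 < cross2 p w2 / cross2 w1 w2 \<and> 0 < cross2 w1 p / cross2 w1 w2 \<and>
     (\<exists>t b. p = t *\<^sub>R b \<and> 0 \<le> t \<and> t \<le> 1 \<and> b \<in> frontier Om \<and>
        (\<exists>\<alpha> \<beta>. \<alpha> \<ge> 0 \<and> \<beta> \<ge> 0 \<and> b = \<alpha> *\<^sub>R w1 + \<beta> *\<^sub>R w2)))"
proof -
  obtain r where r: "r > 0" "\<forall>p. norm p < r \<longrightarrow> \<nu> p < 1" using ball_lt1[OF A] by blast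
  define V where "V = {p. 0 < cross2 p w2 / cross2 w1 w2} \<inter> {p. 0 < cross2 w1 p / cross2 w1 w2} \<inter> ball 0 r"
  have oV: "open V" unfolding V_def
    by (intro open_Int open_ball open_Collect_less continuous_on_const cont_cross1 cont_cross2 D)
  define \<epsilon> where "\<epsilon> = r / (2 * (norm (w1 + w2) + 1))"
  have pos: "2 * (norm (w1 + w2) + 1) > 0" by (simp add: add_nonneg_pos)
  hence e: "\<epsilon> > 0" unfolding \<epsilon>_def using r by simp
  have "\<epsilon> * norm (w1 + w2) < r"
  proof -
    have "\<epsilon> * norm (w1 + w2) = r * (norm (w1 + w2) / (2 * (norm (w1 + w2) + 1)))" unfolding \<epsilon>_def by simp
    moreover have "norm (w1 + w2) / (2 * (norm (w1 + w2) + 1)) < 1"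
    proof -
      have "norm (w1 + w2) < 2 * (norm (w1 + w2) + 1)" by (smt (verit) norm_ge_zero)
      thus ?thesis using pos by (simp only: divide_less_eq_1_pos)
    qed
    ultimately show ?thesis using r by (metis mult.right_neutral mult_strict_left_mono)
  qed
  moreover have "norm (\<epsilon> *\<^sub>R w1 + \<epsilon> *\<^sub>R w2) = \<epsilon> * norm (w1 + w2)"
  proof -
    have "norm (\<epsilon> *\<^sub>R w1 + \<epsilon> *\<^sub>R w2) = norm (\<epsilon> *\<^sub>R (w1 + w2))" by (simp add: scaleR_right_distrib)
    also have "\<dots> = \<epsilon> * norm (w1 + w2)" using e by simp
    finally show ?thesis .
  qed
  ultimately have "\<epsilon> *\<^sub>R w1 + \<epsilon> *\<^sub>R w2 \<in> V" unfolding V_def using e D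
    by (auto simp: cross_lin1 cross_lin2)
  hence neV: "V \<noteq> {}" by blast
  have "\<forall>p\<in>V. 0 < cross2 p w2 / cross2 w1 w2 \<and> 0 < cross2 w1 p / cross2 w1 w2 \<and>
     (\<exists>t b. p = t *\<^sub>R b \<and> 0 \<le> t \<and> t \<le> 1 \<and> b \<in> frontier Om \<and>
        (\<exists>\<alpha> \<beta>. \<alpha> \<ge> 0 \<and> \<beta> \<ge> 0 \<and> b = \<alpha> *\<^sub>R w1 + \<beta> *\<^sub>R w2))"
  proof
    fix p assume pV: "p \<in> V"
    define \<alpha> where "\<alpha> = cross2 p w2 / cross2 w1 w2"
    define \<beta> where "\<beta> = cross2 w1 p / cross2 w1 w2"
    have ab: "\<alpha> > 0" "\<beta> > 0" using pV unfolding V_def \<alpha>_def \<beta>_def by auto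
    have np: "norm p < r" using pV unfolding V_def by simp
    have peq: "p = \<alpha> *\<^sub>R w1 + \<beta> *\<^sub>R w2" unfolding \<alpha>_def \<beta>_def by (rule cramer_eq[OF D])
    have "\<nu> (\<alpha> *\<^sub>R w1) = ereal \<alpha>" using homr[OF A ab(1) fr1[OF w1]] by simp
    moreover have "\<nu> (\<beta> *\<^sub>R w2) = ereal \<beta>" using homr[OF A ab(2) fr1[OF w2]] by simp
    ultimately obtain c where c: "\<nu> p = ereal c" "\<alpha> + \<beta> \<le> c" using superadd[OF A] peq by metis
    have c0: "c > 0" using c ab by linarith
    have "\<nu> p < 1" using r(2) np by blast
    hence c1: "c < 1" using c(1) by (simp add: one_ereal_def)
    define b where "b = (1/c) *\<^sub>R p"
    have "\<nu> b = ereal 1" unfolding b_def using homr[OF A _ c(1), of "1/c"] c0 by simp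
    hence bf: "b \<in> frontier Om" by (rule one_front[OF A])
    have pb: "p = c *\<^sub>R b" unfolding b_def using c0 by simp
    have "b = (\<alpha>/c) *\<^sub>R w1 + (\<beta>/c) *\<^sub>R w2" unfolding b_def peq using c0
      by (simp add: scaleR_right_distrib divide_inverse mult.commute)
    moreover have "\<alpha>/c \<ge> 0" "\<beta>/c \<ge> 0" using ab c0 by auto
    ultimately show "0 < cross2 p w2 / cross2 w1 w2 \<and> 0 < cross2 w1 p / cross2 w1 w2 \<and>
     (\<exists>t b. p = t *\<^sub>R b \<and> 0 \<le> t \<and> t \<le> 1 \<and> b \<in> frontier Om \<and>
        (\<exists>\<alpha> \<beta>. \<alpha> \<ge> 0 \<and> \<beta> \<ge> 0 \<and> b = \<alpha> *\<^sub>R w1 + \<beta> *\<^sub>R w2))"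
      using ab pb bf c0 c1 unfolding \<alpha>_def \<beta>_def by (intro conjI; blast intro: less_imp_le)
  qed
  thus ?thesis using oV neV by blast
qed

lemma mpos:
  assumes w0: "w0 \<in> frontier Om" and w: "w \<in> frontier Om" and D: "cross2 w0 w \<noteq> 0"
  shows "measure lebesgue (sector_region Om w0 w) > 0"
proof -
  obtain V where V: "open V" "V \<noteq> {}" "\<forall>p\<in>V. 0 < cross2 p w / cross2 w0 w \<and> 0 < cross2 w0 p / cross2 w0 w \<and>
     (\<exists>t b. p = t *\<^sub>R b \<and> 0 \<le> t \<and> t \<le> 1 \<and> b \<in> frontier Om \<and>
        (\<exists>\<alpha> \<beta>. \<alpha> \<ge> 0 \<and> \<beta> \<ge> 0 \<and> b = \<alpha> *\<^sub>R w0 + \<beta> *\<^sub>R w))"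
    using V_lemma[OF w0 w D] by blast
  have "V \<subseteq> sector_region Om w0 w - {}"
    using V(3) unfolding sector_region_def by blast
  hence "measure lebesgue ({}::pt set) < measure lebesgue (sector_region Om w0 w)"
    using measure_strict[OF compact_empty sector_compact[OF w0 w D] empty_subsetI V(1) V(2)] by blast
  thus ?thesis by simp
qed

lemma core:
  assumes w0: "w0 \<in> frontier Om" and w: "w \<in> frontier Om" and w': "w' \<in> frontier Om"
    and h1: "0 < cross2 w0 w * cross2 w0 w'" and h2: "0 < cross2 w w' * cross2 w0 w'"
  shows "measure lebesgue (sector_region Om w0 w) < measure lebesgue (sector_region Om w0 w')"
proof -
  have D0: "cross2 w0 w' \<noteq> 0" using h1 by auto
  have D1: "cross2 w0 w \<noteq> 0" using h1 by auto
  have D2: "cross2 w w' \<noteq> 0" using h2 by auto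
  define \<alpha>0 where "\<alpha>0 = cross2 w w' / cross2 w0 w'"
  define \<beta>0 where "\<beta>0 = cross2 w0 w / cross2 w0 w'"
  have a0: "\<alpha>0 > 0" unfolding \<alpha>0_def using h2 by (simp add: zero_less_mult_iff zero_less_divide_iff)
  have b0: "\<beta>0 > 0" unfolding \<beta>0_def using h1 by (simp add: zero_less_mult_iff zero_less_divide_iff)
  have weq: "w = \<alpha>0 *\<^sub>R w0 + \<beta>0 *\<^sub>R w'" unfolding \<alpha>0_def \<beta>0_def by (rule cramer_eq[OF D0])
  have q: "cross2 w0 w / cross2 w w' > 0"
    using h1 h2 by (auto simp: zero_less_mult_iff zero_less_divide_iff)
  have sub: "sector_region Om w0 w \<subseteq> sector_region Om w0 w'"
  proof
    fix p assume "p \<in> sector_region Om w0 w"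
    then obtain t b \<gamma> \<delta> where tb: "p = t *\<^sub>R b" "0 \<le> t" "t \<le> 1" "b \<in> frontier Om"
      "\<gamma> \<ge> 0" "\<delta> \<ge> 0" "b = \<gamma> *\<^sub>R w0 + \<delta> *\<^sub>R w"
      unfolding sector_region_def by blast
    have "b = (\<gamma> + \<delta> * \<alpha>0) *\<^sub>R w0 + (\<delta> * \<beta>0) *\<^sub>R w'"
      using tb(7) weq by (simp add: algebra_simps)
    moreover have "\<gamma> + \<delta> * \<alpha>0 \<ge> 0" "\<delta> * \<beta>0 \<ge> 0" using tb a0 b0 by auto
    ultimately show "p \<in> sector_region Om w0 w'" using tb unfolding sector_region_def by blast
  qed
  obtain V where V: "open V" "V \<noteq> {}" "\<forall>p\<in>V. 0 < cross2 p w' / cross2 w w' \<and> 0 < cross2 w p / cross2 w w' \<and>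
     (\<exists>t b. p = t *\<^sub>R b \<and> 0 \<le> t \<and> t \<le> 1 \<and> b \<in> frontier Om \<and>
        (\<exists>\<alpha> \<beta>. \<alpha> \<ge> 0 \<and> \<beta> \<ge> 0 \<and> b = \<alpha> *\<^sub>R w + \<beta> *\<^sub>R w'))"
    using V_lemma[OF w w' D2] by blast
  have "V \<subseteq> sector_region Om w0 w' - sector_region Om w0 w"
  proof
    fix p assume pV: "p \<in> V"
    then obtain t b \<alpha> \<beta> where tb: "p = t *\<^sub>R b" "0 \<le> t" "t \<le> 1" "b \<in> frontier Om"
      "\<alpha> \<ge> 0" "\<beta> \<ge> 0" "b = \<alpha> *\<^sub>R w + \<beta> *\<^sub>R w'" using V(3) by blast
    have "b = (\<alpha> * \<alpha>0) *\<^sub>R w0 + (\<alpha> * \<beta>0 + \<beta>) *\<^sub>R w'"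
      using tb(7) weq by (simp add: algebra_simps)
    moreover have "\<alpha> * \<alpha>0 \<ge> 0" "\<alpha> * \<beta>0 + \<beta> \<ge> 0" using tb a0 b0 by auto
    ultimately have in1: "p \<in> sector_region Om w0 w'" using tb unfolding sector_region_def by blast
    have "p \<notin> sector_region Om w0 w"
    proof
      assume "p \<in> sector_region Om w0 w"
      then obtain s c \<gamma> \<delta> where sc: "p = s *\<^sub>R c" "0 \<le> s" "\<gamma> \<ge> 0" "\<delta> \<ge> 0" "c = \<gamma> *\<^sub>R w0 + \<delta> *\<^sub>R w"
        unfolding sector_region_def by blast
      have "p = (s * \<gamma>) *\<^sub>R w0 + (s * \<delta>) *\<^sub>R w" using sc by (simp add: algebra_simps)
      hence "cross2 w p = (s * \<gamma>) * cross2 w w0 + (s * \<delta>) * cross2 w w" by (simp add: cross_lin_r)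
      hence "cross2 w p = - ((s * \<gamma>) * cross2 w0 w)" by (simp add: cross_self cross_anti[of w w0])
      hence "cross2 w p / cross2 w w' = - ((s * \<gamma>) * (cross2 w0 w / cross2 w w'))" by simp
      moreover have "(s * \<gamma>) * (cross2 w0 w / cross2 w w') \<ge> 0" using sc q by (intro mult_nonneg_nonneg) auto
      moreover have "0 < cross2 w p / cross2 w w'" using V(3) pV by blast
      ultimately show False by linarith
    qed
    thus "p \<in> sector_region Om w0 w' - sector_region Om w0 w" using in1 by blast
  qed
  thus ?thesis
    by (intro measure_strict[OF sector_compact[OF w0 w D1] sector_compact[OF w0 w' D0] sub V(1) V(2)])
qed


lemma angle_inj:
  assumes w0: "w0 \<in> frontier Om" and w: "w \<in> frontier Om" and w': "w' \<in> frontier Om"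
    and eqa: "hyp_angle Om w0 w = hyp_angle Om w0 w'"
  shows "w = w'"
proof -
  define c where "c = cross2 w0 w"
  define c' where "c' = cross2 w0 w'"
  define m where "m = measure lebesgue (sector_region Om w0 w)"
  define m' where "m' = measure lebesgue (sector_region Om w0 w')"
  have eq: "2 * sgn c * m = 2 * sgn c' * m'" using eqa unfolding hyp_angle_def c_def c'_def m_def m'_def by simp
  have mp: "c \<noteq> 0 \<Longrightarrow> m > 0" unfolding c_def m_def using mpos[OF w0 w] by blast
  have mp': "c' \<noteq> 0 \<Longrightarrow> m' > 0" unfolding c'_def m'_def using mpos[OF w0 w'] by blast
  show ?thesis
  proof (cases "c = 0")
    case True
    hence ww0: "w0 = w" using same_ray[OF w0 w] unfolding c_def by blast
    have "c' = 0"
    proof (rule ccontr)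
      assume "c' \<noteq> 0"
      hence "sgn c' * m' \<noteq> 0" using mp' by (simp add: sgn_if)
      thus False using eq True by simp
    qed
    hence "w0 = w'" using same_ray[OF w0 w'] unfolding c'_def by blast
    thus ?thesis using ww0 by simp
  next
    case False
    have c'0: "c' \<noteq> 0"
    proof
      assume "c' = 0"
      hence "2 * sgn c * m = 0" using eq by simp
      moreover have "m > 0" using mp False by blast
      ultimately show False using False by (simp add: sgn_if split: if_splits)
    qed
    have mpos1: "m > 0" "m' > 0" using mp mp' False c'0 by auto
    have cc: "c * c' > 0 \<and> m = m'"
    proof (cases "c > 0")
      case True
      show ?thesis
      proof (cases "c' > 0")
        case True
        thus ?thesis using \<open>c > 0\<close> eq by (simp add: sgn_if)
      next
        case False
        hence "c' < 0" using c'0 by simp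
        hence "2 * m = - 2 * m'" using eq \<open>c > 0\<close> by (simp add: sgn_if)
        thus ?thesis using mpos1 by simp
      qed
    next
      case False
      hence cn: "c < 0" using \<open>c \<noteq> 0\<close> by simp
      show ?thesis
      proof (cases "c' > 0")
        case True
        hence "- 2 * m = 2 * m'" using eq cn by (simp add: sgn_if)
        thus ?thesis using mpos1 by simp
      next
        case False
        hence "c' < 0" using c'0 by simp
        thus ?thesis using cn eq by (simp add: sgn_if mult_neg_neg)
      qed
    qed
    show ?thesis
    proof (rule ccontr)
      assume ne: "w \<noteq> w'"
      define e where "e = cross2 w w'"
      have e0: "e \<noteq> 0" using same_ray[OF w w'] ne unfolding e_def by blast
      show False
      proof (cases "e * c' > 0")
        case True
        have "m < m'" unfolding m_def m'_def
          by (rule core[OF w0 w w']) (use cc True in \<open>auto simp: c_def c'_def e_def\<close>)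
        thus False using cc by simp
      next
        case False
        hence "e * c' < 0" using e0 c'0 by (simp add: not_less order_le_less mult_eq_0_iff)
        hence ec: "0 < - e * c" using cc by (auto simp: zero_less_mult_iff mult_less_0_iff)
        have "m' < m" unfolding m_def m'_def
        proof (rule core[OF w0 w' w])
          show "0 < cross2 w0 w' * cross2 w0 w" using cc unfolding c_def c'_def by (simp add: mult.commute)
          show "0 < cross2 w' w * cross2 w0 w" using ec cross_anti[of w' w] unfolding e_def c_def by simp
        qed
        thus False using cc by simp
      qed
    qed
  qed
qed

end



lemma closed_antipolar: "closed (antipolar S)"
proof -
  have "antipolar S = (\<Inter>w\<in>S. {z. 1 \<le> fst z * fst w - snd z * snd w})"
    unfolding antipolar_def by (auto simp: case_prod_unfold)
  moreover have "closed {z::pt. 1 \<le> fst z * fst w - snd z * snd w}" for w :: pt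
    by (intro closed_Collect_le continuous_intros)
  ultimately show ?thesis by auto
qed

theorem proposition5:
  fixes \<nu> :: "real \<times> real \<Rightarrow> ereal" and h :: "real \<times> real"
  assumes "antinorm \<nu>"
    and "h \<noteq> 0"
    and "prop_star (unit_ball \<nu>)"
    and "prop_starstar (edom \<nu>) (unit_ball \<nu>)"
  shows "((- fst h, snd h) \<in> interior (antipolar (unit_ball \<nu>)) \<longrightarrow>
            (\<forall>u. is_max_point \<nu> h u \<longleftrightarrow> u = 0))
       \<and> (\<forall>w0 w0d. w0 \<in> frontier (unit_ball \<nu>)
            \<and> w0d \<in> frontier (antipolar (unit_ball \<nu>))
            \<and> fst w0d * fst w0 - snd w0d * snd w0 = 1 \<longrightarrow>
          (- fst h, snd h) \<in> frontier (antipolar (unit_ball \<nu>)) \<longrightarrow>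
          (\<forall>\<eta> \<in> hyp_angles (antipolar (unit_ball \<nu>)) w0d.
             (hcosh (antipolar (unit_ball \<nu>)) w0d \<eta>, hsinh (antipolar (unit_ball \<nu>)) w0d \<eta>)
               = (- fst h, snd h) \<longrightarrow>
             (\<forall>\<theta> \<in> diamond_angles (unit_ball \<nu>) w0 (antipolar (unit_ball \<nu>)) w0d \<eta>.
                \<forall>lam::real. lam \<ge> 0 \<longrightarrow>
                  is_max_point \<nu> h (lam *\<^sub>R (hcosh (unit_ball \<nu>) w0 \<theta>, hsinh (unit_ball \<nu>) w0 \<theta>)))))"
proof (intro conjI impI allI ballI)
  assume P: "(- fst h, snd h) \<in> interior (antipolar (unit_ball \<nu>))"
  fix u
  show "is_max_point \<nu> h u \<longleftrightarrow> u = 0" by (rule part1[OF assms(1) P])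
next
  fix w0 w0d \<eta> \<theta> and lam :: real
  assume H: "w0 \<in> frontier (unit_ball \<nu>) \<and> w0d \<in> frontier (antipolar (unit_ball \<nu>))
            \<and> fst w0d * fst w0 - snd w0d * snd w0 = 1"
    and F: "(- fst h, snd h) \<in> frontier (antipolar (unit_ball \<nu>))"
    and "\<eta> \<in> hyp_angles (antipolar (unit_ball \<nu>)) w0d"
    and E: "(hcosh (antipolar (unit_ball \<nu>)) w0d \<eta>, hsinh (antipolar (unit_ball \<nu>)) w0d \<eta>)
               = (- fst h, snd h)"
    and T: "\<theta> \<in> diamond_angles (unit_ball \<nu>) w0 (antipolar (unit_ball \<nu>)) w0d \<eta>"
    and lam: "lam \<ge> 0"
  have w0: "w0 \<in> frontier (unit_ball \<nu>)" using H by blast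
  have Pa: "(- fst h, snd h) \<in> antipolar (unit_ball \<nu>)"
    using F frontier_subset_closed[OF closed_antipolar] by blast
  have th: "\<theta> \<in> hyp_angles (unit_ball \<nu>) w0"
    and teq: "hcosh (unit_ball \<nu>) w0 \<theta> * hcosh (antipolar (unit_ball \<nu>)) w0d \<eta>
              - hsinh (unit_ball \<nu>) w0 \<theta> * hsinh (antipolar (unit_ball \<nu>)) w0d \<eta> = 1"
    using T unfolding diamond_angles_def by auto
  obtain w where w: "w \<in> frontier (unit_ball \<nu>)" "\<theta> = hyp_angle (unit_ball \<nu>) w0 w"
    using th unfolding hyp_angles_def by blast
  have hp: "hyp_point (unit_ball \<nu>) w0 \<theta> = w"
    unfolding hyp_point_def
  proof (rule the_equality)
    show "w \<in> frontier (unit_ball \<nu>) \<and> hyp_angle (unit_ball \<nu>) w0 w = \<theta>" using w by simp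
  next
    fix x assume "x \<in> frontier (unit_ball \<nu>) \<and> hyp_angle (unit_ball \<nu>) w0 x = \<theta>"
    thus "x = w" using angle_inj[OF assms(1) assms(3) w0 _ w(1)] w(2) by blast
  qed
  have hc: "hcosh (unit_ball \<nu>) w0 \<theta> = fst w" "hsinh (unit_ball \<nu>) w0 \<theta> = snd w"
    unfolding hcosh_def hsinh_def hp by auto
  have hd: "hcosh (antipolar (unit_ball \<nu>)) w0d \<eta> = - fst h" "hsinh (antipolar (unit_ball \<nu>)) w0d \<eta> = snd h"
    using E by auto
  have "fst w * (- fst h) - snd w * snd h = 1" using teq hc hd by simp
  hence hw: "h \<bullet> w = -1" by (simp add: inner_prod_def algebra_simps)
  have nw: "\<nu> w = ereal 1" using fr1[OF assms(1) assms(3) w(1)] .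
  have "(hcosh (unit_ball \<nu>) w0 \<theta>, hsinh (unit_ball \<nu>) w0 \<theta>) = w" using hc by simp
  thus "is_max_point \<nu> h (lam *\<^sub>R (hcosh (unit_ball \<nu>) w0 \<theta>, hsinh (unit_ball \<nu>) w0 \<theta>))"
    using part2_max[OF assms(1) Pa nw hw lam] by simp
qed


end
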